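(* Let $m<n$, let $A\in\mathbb{R}^{m\times n}$ and $b\in\mathbb{R}^{m}$, and assume that the system $Ax=b$ has a solution. Partition $A=[B~\tilde{B}]$ with $B\in\mathbb{R}^{m\times m}$ and $\tilde{B}\in\mathbb{R}^{m\times(n-m)}$. Assume that every diagonal entry of $B$ is nonzero and that every row $\tilde{B}_i$ of $\tilde{B}$ is nonzero. Let $L$ be the lower triangular part of $B$ (including the diagonal), $R=B-L$, $N(\tilde{B})=\operatorname{diag}(\|\tilde{B}_1\|_1,\ldots,\|\tilde{B}_m\|_1)$, and let $s(\tilde{B})\in\mathbb{R}^{(n-m)\times m}$ be the matrix whose $(j,i)$ entry is the sign ($1$, $0$ or $-1$) of the $(j,i)$ entry of $\tilde{B}^T$. Starting from any $x^{(0)}=\begin{bmatrix}x_1^{(0)}\\ x_2^{(0)}\end{bmatrix}$ with $x_1^{(0)}\in\mathbb{R}^m$, $x_2^{(0)}\in\mathbb{R}^{n-m}$, define for $k\ge 0$ the generalized Gauss–Seidel iteration $$x_2^{(k+1)}=x_2^{(k)}+s(\tilde{B})\,d^{(k)},\qquad d^{(k)}_i=\frac{b_i-B_ix_1^{(k)}-\tilde{B}_ix_2^{(k)}}{m\|\tilde{B}_i\|_1}\ (i=1,\ldots,m),$$ $$x_1^{(k+1)}=L^{-1}\big(-Rx_1^{(k)}+b-\tilde{B}x_2^{(k+1)}\big),\qquad x^{(k+1)}=\begin{bmatrix}x_1^{(k+1)}\\ x_2^{(k+1)}\end{bmatrix},$$ where $B_i,\tilde{B}_i$ denote the $i$th rows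 of $B,\tilde{B}$. If, for some matrix norm $\|\cdot\|$ on $\mathbb{R}^{m\times m}$, $$\|I-BL^{-1}\|<1\quad\text{and}\quad \|mI-\tilde{B}\,s(\tilde{B})\,N(\tilde{B})^{-1}\|<m,$$ then the sequence $(x^{(k)})$ converges and its limit $x=\lim_k x^{(k)}$ is a solution of $Ax=b$.
   Context: $\|\cdot\|_1$ denotes the $\ell_1$-norm of a vector. The $x_2$-update is the iterative method of Wheaton–Awoniyi applied to $\tilde{B}y=b-Bx_1^{(k)}$, and the $x_1$-update is one Gauss–Seidel step for $Bz=b-\tilde{B}x_2^{(k+1)}$ starting at $x_1^{(k)}$. *)

theory Defs
  imports "HOL-Analysis.Analysis"
begin

text \<open>Index type 'm (size m) carries a linear order so that "lower triangular" makes sense;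
  index type 'k has size n - m (automatically at least 1, so m < n).\<close>

definition lower_part :: "real^('m::{finite,linorder})^('m::{finite,linorder}) \<Rightarrow> real^('m::{finite,linorder})^('m::{finite,linorder})" where
  "lower_part B = (\<chi> i j. if j \<le> i then B$i$j else 0)"

definition strict_upper_part :: "real^('m::{finite,linorder})^('m::{finite,linorder}) \<Rightarrow> real^('m::{finite,linorder})^('m::{finite,linorder})" where
  "strict_upper_part B = B - lower_part B"

definition row_l1 :: "real^'k^'m \<Rightarrow> 'm \<Rightarrow> real" where
  "row_l1 Bt i = (\<Sum>l\<in>UNIV. \<bar>Bt$i$l\<bar>)"

definition row_norm_diag :: "real^'k^'m \<Rightarrow> real^'m^'m" where
  "row_norm_diag Bt = (\<chi> i j. if i = j then row_l1 Bt i else 0)"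

definition sign_mat :: "real^'k^'m \<Rightarrow> real^'m^'k" where
  "sign_mat Bt = (\<chi> j i. sgn ((transpose Bt)$j$i))"

definition is_matrix_norm :: "(real^'m^'m \<Rightarrow> real) \<Rightarrow> bool" where
  "is_matrix_norm nm \<longleftrightarrow>
     (\<forall>M. 0 \<le> nm M) \<and> (\<forall>M. nm M = 0 \<longleftrightarrow> M = 0) \<and>
     (\<forall>c M. nm (c *\<^sub>R M) = \<bar>c\<bar> * nm M) \<and>
     (\<forall>M P. nm (M + P) \<le> nm M + nm P) \<and>
     (\<forall>M P. nm (M ** P) \<le> nm M * nm P)"

definition gs_step :: "real^('m::{finite,linorder})^('m::{finite,linorder}) \<Rightarrow> real^'k^('m::{finite,linorder}) \<Rightarrow> real^('m::{finite,linorder})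
    \<Rightarrow> ((real^('m::{finite,linorder})) \<times> (real^'k)) \<Rightarrow> ((real^('m::{finite,linorder})) \<times> (real^'k))" where
  "gs_step B Bt b x =
     (let x1 = fst x; x2 = snd x;
          d = (\<chi> i. (b$i - (B$i) \<bullet> x1 - (Bt$i) \<bullet> x2) / (real CARD('m) * row_l1 Bt i));
          x2' = x2 + sign_mat Bt *v d;
          x1' = matrix_inv (lower_part B) *v (- (strict_upper_part B *v x1) + b - Bt *v x2')
      in (x1', x2'))"

end

theory Submission
  imports Defs
begin

lemma inv_props:
  fixes A :: "real^'n^'n"
  assumes "invertible A"
  shows "A ** matrix_inv A = mat 1 \<and> matrix_inv A ** A = mat 1"
  using assms unfolding matrix_inv_def invertible_def by (rule someI_ex)

lemma lower_invertible:
  fixes L :: "real^('m::{finite,linorder})^('m::{finite,linorder})"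
  assumes up: "\<And>i j. i < j \<Longrightarrow> L$i$j = 0" and dg: "\<And>i. L$i$i \<noteq> 0"
  shows "invertible L"
proof -
  have "\<forall>x. L *v x = 0 \<longrightarrow> x = 0"
  proof (intro allI impI, rule ccontr)
    fix x :: "real^('m::{finite,linorder})"
    assume Lx: "L *v x = 0" and nz: "x \<noteq> 0"
    define S where "S = {i. x$i \<noteq> 0}"
    have "S \<noteq> {}" using nz unfolding S_def by (auto simp: vec_eq_iff)
    define i where "i = Min S"
    have iS: "i \<in> S" unfolding i_def using \<open>S \<noteq> {}\<close> by (intro Min_in) auto
    have lt: "x$j = 0" if "j < i" for j
    proof (rule ccontr)
      assume "x$j \<noteq> 0" then have "j \<in> S" unfolding S_def by simp
      then have "i \<le> j" unfolding i_def by (intro Min_le) auto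
      with that show False by simp
    qed
    have eq: "L$i$j * x$j = (if j = i then L$i$i * x$i else 0)" for j
        using lt[of j] up[of i j] by (cases "j < i"; cases "i < j") auto
    have "(L *v x)$i = (\<Sum>j\<in>UNIV. if j = i then L$i$i * x$i else 0)"
      unfolding matrix_vector_mult_def vec_lambda_beta by (rule sum.cong[OF refl eq])
    then have "(L *v x)$i = L$i$i * x$i" by simp
    with Lx have "L$i$i * x$i = 0" by simp
    with dg[of i] iS show False unfolding S_def by simp
  qed
  then show ?thesis
    using invertible_left_inverse matrix_left_invertible_ker by blast
qed

lemma row_l1_pos:
  assumes "Bt$i \<noteq> 0"
  shows "row_l1 Bt i > 0"
proof -
  obtain l where l: "Bt$i$l \<noteq> 0" using assms by (auto simp: vec_eq_iff)
  have "\<bar>Bt$i$l\<bar> \<le> row_l1 Bt i" unfolding row_l1_def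
    by (rule member_le_sum) auto
  with l show ?thesis by simp
qed

lemma d1: fixes f :: "'a::finite \<Rightarrow> real" shows "(\<Sum>k\<in>UNIV. (if k = i then (1::real) else 0) * f k) = f i"
proof -
  have "(\<Sum>k\<in>UNIV. (if k = i then (1::real) else 0) * f k) = (\<Sum>k\<in>UNIV. if k = i then f k else 0)"
    by (rule sum.cong) auto
  then show ?thesis by simp
qed
lemma d2: fixes f :: "'a::finite \<Rightarrow> real" shows "(\<Sum>k\<in>UNIV. f k * (if k = i then (1::real) else 0)) = f i"
  using d1[of i f] by (simp add: mult.commute)

lemma entry_bound:
  fixes nm :: "real^'n^'n \<Rightarrow> real"
  assumes nm: "is_matrix_norm nm"
  shows "\<exists>C\<ge>0. \<forall>X i j. \<bar>X$i$j\<bar> \<le> C * nm X"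
proof -
  define E :: "'n \<Rightarrow> 'n \<Rightarrow> real^'n^'n" where
    "E i j = (\<chi> a c. if a = i \<and> c = j then 1 else 0)" for i j
  have Enz: "nm (E i j) > 0" for i j
  proof -
    have "E i j \<noteq> 0" unfolding E_def by (auto simp: vec_eq_iff)
    then show ?thesis using nm unfolding is_matrix_norm_def
      by (metis less_eq_real_def)
  qed
  have idt: "E i i ** X ** E j j = X$i$j *\<^sub>R E i j" for i j X
  proof -
    have 1: "E i i ** X = (\<chi> a c. if a = i then X$i$c else 0)"
      unfolding E_def matrix_matrix_mult_def
      by (simp add: vec_eq_iff d1 del: mult_if_delta)
    show ?thesis unfolding 1 unfolding E_def matrix_matrix_mult_def
      by (auto simp: vec_eq_iff d2)
  qed
  define C where "C = (\<Sum>i\<in>UNIV. \<Sum>j\<in>UNIV. nm (E i i) * nm (E j j) / nm (E i j))"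
  have nn: "0 \<le> nm (E i i) * nm (E j j) / nm (E i j)" for i j
    using nm unfolding is_matrix_norm_def by simp
  have Cb: "nm (E i i) * nm (E j j) / nm (E i j) \<le> C" for i j
  proof -
    have "nm (E i i) * nm (E j j) / nm (E i j) \<le> (\<Sum>j\<in>UNIV. nm (E i i) * nm (E j j) / nm (E i j))"
      by (rule member_le_sum) (auto simp: nn)
    also have "\<dots> \<le> C" unfolding C_def
      by (rule member_le_sum[where f = "\<lambda>i. \<Sum>j\<in>UNIV. nm (E i i) * nm (E j j) / nm (E i j)"])
         (auto intro: sum_nonneg simp: nn)
    finally show ?thesis .
  qed
  have C0: "C \<ge> 0" using Cb[of undefined undefined] nn[of undefined undefined] by linarith
  have "\<bar>X$i$j\<bar> \<le> C * nm X" for X i j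
  proof -
    have "\<bar>X$i$j\<bar> * nm (E i j) = nm (E i i ** X ** E j j)"
      using nm unfolding idt is_matrix_norm_def by simp
    also have "\<dots> \<le> nm (E i i ** X) * nm (E j j)"
      using nm unfolding is_matrix_norm_def by blast
    also have "\<dots> \<le> nm (E i i) * nm X * nm (E j j)"
      using nm unfolding is_matrix_norm_def by (meson mult_right_mono)
    finally have "\<bar>X$i$j\<bar> \<le> nm (E i i) * nm (E j j) / nm (E i j) * nm X"
      using Enz[of i j] by (simp add: field_simps)
    also have "\<dots> \<le> C * nm X"
      using Cb[of i j] nm unfolding is_matrix_norm_def by (intro mult_right_mono) auto
    finally show ?thesis .
  qed
  with C0 show ?thesis by blast
qed

lemma mv_bound:
  fixes Y :: "real^'m^'n"
  assumes "\<And>j. \<bar>v$j\<bar> \<le> K"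
  shows "\<bar>(Y *v v)$i\<bar> \<le> (\<Sum>j\<in>UNIV. \<bar>Y$i$j\<bar>) * K"
proof -
  have "\<bar>(Y *v v)$i\<bar> = \<bar>\<Sum>j\<in>UNIV. Y$i$j * v$j\<bar>" by (simp add: matrix_vector_mult_def)
  also have "\<dots> \<le> (\<Sum>j\<in>UNIV. \<bar>Y$i$j\<bar> * \<bar>v$j\<bar>)"
    by (rule order_trans[OF sum_abs]) (simp add: abs_mult)
  also have "\<dots> \<le> (\<Sum>j\<in>UNIV. \<bar>Y$i$j\<bar> * K)"
    by (intro sum_mono mult_left_mono assms) auto
  finally show ?thesis by (simp add: sum_distrib_right)
qed

lemma real_conv:
  fixes a :: "nat \<Rightarrow> real"
  assumes "\<And>k. \<bar>a (Suc k) - a k\<bar> \<le> D * q^k" and "0 \<le> q" "q < 1"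
  shows "\<exists>l. a \<longlonglongrightarrow> l"
proof -
  have sg: "summable (\<lambda>k. D * q^k)"
    using assms by (intro summable_mult summable_geometric) simp
  have "summable (\<lambda>k. a (Suc k) - a k)"
    by (rule summable_comparison_test'[OF sg]) (use assms in simp)
  then have "(\<lambda>n. \<Sum>k<n. a (Suc k) - a k) \<longlonglongrightarrow> (\<Sum>k. a (Suc k) - a k)"
    by (rule summable_LIMSEQ)
  then have "(\<lambda>n. a 0 + (\<Sum>k<n. a (Suc k) - a k)) \<longlonglongrightarrow> a 0 + (\<Sum>k. a (Suc k) - a k)"
    by (intro tendsto_add tendsto_const)
  then show ?thesis by (auto simp: sum_lessThan_telescope)
qed

lemma vec_conv:
  fixes v :: "nat \<Rightarrow> real^'n" and Y :: "real^'m^'n"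
  assumes "\<And>k. v (Suc k) - v k = Y *v R k"
    and "\<And>k j. \<bar>R k $ j\<bar> \<le> K * q^k" and "0 \<le> q" "q < 1"
  shows "\<exists>l. v \<longlonglongrightarrow> l"
proof -
  have "\<exists>l. (\<lambda>k. v k $ i) \<longlonglongrightarrow> l" for i
  proof (rule real_conv[OF _ assms(3,4)])
    fix k
    have "\<bar>v (Suc k) $ i - v k $ i\<bar> = \<bar>(Y *v R k) $ i\<bar>"
      using assms(1)[of k] by (metis vector_minus_component)
    also have "\<dots> \<le> (\<Sum>j\<in>UNIV. \<bar>Y$i$j\<bar>) * (K * q^k)"
      by (rule mv_bound) (rule assms(2))
    finally show "\<bar>v (Suc k) $ i - v k $ i\<bar> \<le> ((\<Sum>j\<in>UNIV. \<bar>Y$i$j\<bar>) * K) * q^k"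
      by (simp add: mult.assoc)
  qed
  then obtain l where "\<And>i. (\<lambda>k. v k $ i) \<longlonglongrightarrow> l i" by metis
  then have "v \<longlonglongrightarrow> (\<chi> i. l i)" by (intro vec_tendstoI) simp
  then show ?thesis by blast
qed

theorem mainTheorem2:
  fixes B :: "real^('m::{finite,linorder})^('m::{finite,linorder})"
    and Bt :: "real^('k::finite)^('m::{finite,linorder})"
    and b :: "real^('m::{finite,linorder})"
    and x10 :: "real^('m::{finite,linorder})" and x20 :: "real^'k"
    and nm :: "real^('m::{finite,linorder})^('m::{finite,linorder}) \<Rightarrow> real"
  assumes solvable: "\<exists>y1 y2. B *v y1 + Bt *v y2 = b"
    and diag_nz: "\<forall>i. B$i$i \<noteq> 0"
    and rows_nz: "\<forall>i. Bt$i \<noteq> 0"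
    and nm: "is_matrix_norm nm"
    and c1: "nm (mat 1 - B ** matrix_inv (lower_part B)) < 1"
    and c2: "nm (real CARD('m) *\<^sub>R mat 1 - Bt ** sign_mat Bt ** matrix_inv (row_norm_diag Bt))
               < real CARD('m)"
  shows "\<exists>y1 y2. ((\<lambda>k. (gs_step B Bt b ^^ k) (x10, x20)) \<longlonglongrightarrow> (y1, y2))
                 \<and> B *v y1 + Bt *v y2 = b"
proof -
  define m where "m = real CARD('m)"
  have m0: "m > 0" unfolding m_def by simp
  define L where "L = lower_part B"
  have Linv: "invertible L"
    by (rule lower_invertible) (auto simp: L_def lower_part_def diag_nz)
  define Li where "Li = matrix_inv L"
  have LiL: "Li ** L = mat 1" using inv_props[OF Linv] Li_def by simp
  define N where "N = row_norm_diag Bt"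
  have rpos: "row_l1 Bt i > 0" for i using row_l1_pos rows_nz by blast
  have rnz: "row_l1 Bt i \<noteq> 0" for i using rpos[of i] by simp
  have Ninv: "invertible N"
    by (rule lower_invertible) (auto simp: N_def row_norm_diag_def rnz)
  define Ni where "Ni = matrix_inv N"
  have NiN: "Ni ** N = mat 1" using inv_props[OF Ninv] Ni_def by simp
  have Niv: "Ni *v r = (\<chi> i. r$i / row_l1 Bt i)" for r
  proof -
    define w where "w = (\<chi> i. r$i / row_l1 Bt i)"
    have "N *v w = r"
    proof (subst vec_eq_iff, intro allI)
      fix i
      have "(N *v w)$i = (\<Sum>j\<in>UNIV. if j = i then row_l1 Bt i * w$i else 0)"
        unfolding matrix_vector_mult_def vec_lambda_beta N_def row_norm_diag_def
        by (rule sum.cong) auto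
      also have "\<dots> = r$i" using rpos[of i] by (simp add: w_def)
      finally show "(N *v w)$i = r$i" .
    qed
    then have "Ni *v r = (Ni ** N) *v w" by (metis matrix_vector_mul_assoc)
    then show ?thesis using NiN w_def by simp
  qed
  define S where "S = sign_mat Bt"
  define P where "P = mat 1 - (1/m) *\<^sub>R (Bt ** S ** Ni)"
  define Q where "Q = mat 1 - B ** Li"
  define M where "M = Q ** P"
  define res where "res = (\<lambda>x. b - B *v fst x - Bt *v snd x)"
  define f where "f = gs_step B Bt b"
  have step: "snd (f x) = snd x + ((1/m) *\<^sub>R (S ** Ni)) *v res x \<and>
              fst (f x) = fst x + (Li ** P) *v res x \<and> res (f x) = M *v res x" for x
  proof -
    obtain x1 x2 where x: "x = (x1, x2)" by fastforce
    define r where "r = res x"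
    define c where "c = 1/m"
    define u where "u = Ni *v r"
    have d: "(\<chi> i. (b$i - (B$i) \<bullet> x1 - (Bt$i) \<bullet> x2) / (real CARD('m) * row_l1 Bt i)) = c *\<^sub>R u"
      unfolding u_def Niv r_def res_def x c_def
      using m0 by (simp add: vec_eq_iff matrix_vector_mul_component m_def field_simps)
    define x2' where "x2' = x2 + c *\<^sub>R (S *v u)"
    have x2'e: "x2 + sign_mat Bt *v (c *\<^sub>R u) = x2'"
      unfolding x2'_def S_def by (simp add: matrix_vector_mult_scaleR)
    define rm where "rm = b - B *v x1 - Bt *v x2'"
    have rmP: "rm = P *v r"
    proof -
      have "rm = r - c *\<^sub>R (Bt *v (S *v u))"
        unfolding rm_def x2'_def r_def res_def x
        by (simp add: matrix_vector_right_distrib matrix_vector_mult_scaleR algebra_simps)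
      also have "\<dots> = P *v r"
        unfolding P_def u_def c_def
        by (simp add: matrix_vector_mult_diff_rdistrib scaleR_matrix_vector_assoc[symmetric]
              matrix_vector_mul_assoc[symmetric])
      finally show ?thesis .
    qed
    have x1e: "- (strict_upper_part B *v x1) + b - Bt *v x2' = L *v x1 + rm"
      unfolding strict_upper_part_def L_def rm_def
      by (simp add: matrix_vector_mult_diff_rdistrib algebra_simps)
    define x1' where "x1' = x1 + Li *v rm"
    have x1'e: "matrix_inv (lower_part B) *v (- (strict_upper_part B *v x1) + b - Bt *v x2') = x1'"
      unfolding x1e x1'_def Li_def[symmetric] L_def[symmetric]
      by (simp add: matrix_vector_right_distrib matrix_vector_mul_assoc LiL)
    have fx: "f x = (x1', x2')"
      unfolding f_def gs_step_def Let_def x fst_conv snd_conv d x2'e x1'e ..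
    have e1: "c *\<^sub>R (S *v u) = ((1/m) *\<^sub>R (S ** Ni)) *v r"
      unfolding c_def u_def
      by (simp add: scaleR_matrix_vector_assoc[symmetric] matrix_vector_mul_assoc)
    have s1: "snd (f x) = snd x + ((1/m) *\<^sub>R (S ** Ni)) *v res x"
      unfolding fx using e1 by (simp add: x x2'_def r_def)
    have e2: "Li *v rm = (Li ** P) *v r"
      unfolding rmP by (simp add: matrix_vector_mul_assoc)
    have s2: "fst (f x) = fst x + (Li ** P) *v res x"
      unfolding fx using e2 by (simp add: x x1'_def r_def)
    have s3: "res (f x) = M *v res x"
    proof -
      have "res (f x) = rm - B *v (Li *v rm)"
        unfolding fx res_def fst_conv snd_conv x1'_def rm_def
        by (simp add: matrix_vector_right_distrib algebra_simps)
      also have "\<dots> = Q *v rm"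
        unfolding Q_def by (simp add: matrix_vector_mult_diff_rdistrib matrix_vector_mul_assoc)
      also have "\<dots> = M *v res x"
        unfolding rmP M_def r_def by (simp add: matrix_vector_mul_assoc)
      finally show ?thesis .
    qed
    show ?thesis using s1 s2 s3 by blast
  qed
  define X where "X k = (f ^^ k) (x10, x20)" for k
  define R where "R k = res (X k)" for k
  have Xs: "X (Suc k) = f (X k)" for k by (simp add: X_def)
  define mp where "mp k = ((\<lambda>A. M ** A) ^^ k) (mat 1)" for k
  have mps: "mp (Suc k) = M ** mp k" for k by (simp add: mp_def)
  have Rmp: "R k = mp k *v R 0" for k
  proof (induction k)
    case 0 then show ?case by (simp add: mp_def)
  next
    case (Suc k)
    have "R (Suc k) = M *v R k" using step[of "X k"] by (simp add: R_def Xs)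
    also have "\<dots> = mp (Suc k) *v R 0" by (simp add: Suc mps matrix_vector_mul_assoc)
    finally show ?case .
  qed
  have nm0: "\<And>A. 0 \<le> nm A" and nmm: "\<And>A C. nm (A ** C) \<le> nm A * nm C"
    and nms: "\<And>c A. nm (c *\<^sub>R A) = \<bar>c\<bar> * nm A"
    using nm unfolding is_matrix_norm_def by blast+
  have Pe: "P = (1/m) *\<^sub>R (m *\<^sub>R mat 1 - Bt ** S ** Ni)"
    unfolding P_def using m0 by (simp add: scaleR_right_diff_distrib)
  have nP: "nm P < 1"
  proof -
    have "nm P = (1/m) * nm (m *\<^sub>R mat 1 - Bt ** S ** Ni)"
      unfolding Pe nms using m0 by simp
    also have "\<dots> < (1/m) * m"
      using c2 m0 unfolding S_def Ni_def N_def m_def by (intro mult_strict_left_mono) auto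
    finally show ?thesis using m0 by simp
  qed
  have nQ: "nm Q < 1" using c1 unfolding Q_def Li_def L_def .
  define q where "q = nm M"
  have q0: "0 \<le> q" unfolding q_def by (rule nm0)
  have q1: "q < 1"
  proof -
    have "q \<le> nm Q * nm P" unfolding q_def M_def by (rule nmm)
    also have "\<dots> \<le> 1 * nm P" using nQ nm0[of P] by (intro mult_right_mono) auto
    finally show ?thesis using nP by simp
  qed
  have nmp: "nm (mp k) \<le> q^k * nm (mat 1)" for k
  proof (induction k)
    case 0 then show ?case by (simp add: mp_def)
  next
    case (Suc k)
    have "nm (mp (Suc k)) \<le> q * nm (mp k)" unfolding mps q_def by (rule nmm)
    also have "\<dots> \<le> q * (q^k * nm (mat 1))" using Suc q0 by (intro mult_left_mono) auto
    finally show ?case by (simp add: mult.assoc)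
  qed
  obtain C where C0: "C \<ge> 0" and Cb: "\<And>Y i j. \<bar>Y$i$j\<bar> \<le> C * nm Y"
    using entry_bound[OF nm] by blast
  define K where "K = C * nm (mat 1) * (\<Sum>j\<in>UNIV. \<bar>R 0 $ j\<bar>)"
  have Rb: "\<bar>R k $ i\<bar> \<le> K * q^k" for k i
  proof -
    have "\<bar>R k $ i\<bar> = \<bar>\<Sum>j\<in>UNIV. mp k $ i $ j * R 0 $ j\<bar>"
      unfolding Rmp[of k] by (simp add: matrix_vector_mult_def)
    also have "\<dots> \<le> (\<Sum>j\<in>UNIV. \<bar>mp k $ i $ j\<bar> * \<bar>R 0 $ j\<bar>)"
      by (rule order_trans[OF sum_abs]) (simp add: abs_mult)
    also have "\<dots> \<le> (\<Sum>j\<in>UNIV. (C * (q^k * nm (mat 1))) * \<bar>R 0 $ j\<bar>)"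
    proof (intro sum_mono mult_right_mono)
      fix j
      show "\<bar>mp k $ i $ j\<bar> \<le> C * (q ^ k * nm (mat 1))"
        using Cb[of "mp k" i j] nmp[of k] C0 by (meson order_trans mult_left_mono)
    qed auto
    also have "\<dots> = K * q^k"
      unfolding K_def by (simp add: sum_distrib_left[symmetric] mult_ac)
    finally show ?thesis .
  qed
  obtain y1 where y1: "(\<lambda>k. fst (X k)) \<longlonglongrightarrow> y1"
    using vec_conv[where v = "\<lambda>k. fst (X k)" and Y = "Li ** P" and R = R, OF _ Rb q0 q1]
      step by (auto simp: Xs R_def)
  obtain y2 where y2: "(\<lambda>k. snd (X k)) \<longlonglongrightarrow> y2"
    using vec_conv[where v = "\<lambda>k. snd (X k)" and Y = "(1/m) *\<^sub>R (S ** Ni)" and R = R, OF _ Rb q0 q1]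
      step by (auto simp: Xs R_def)
  have XL: "X \<longlonglongrightarrow> (y1, y2)"
    using tendsto_Pair[OF y1 y2] by simp
  have "R \<longlonglongrightarrow> b - B *v y1 - Bt *v y2"
    unfolding R_def res_def
    by (intro tendsto_diff tendsto_const
        bounded_linear.tendsto[OF matrix_vector_mul_bounded_linear] y1 y2)
  moreover have "R \<longlonglongrightarrow> 0"
  proof (rule vec_tendstoI)
    fix i
    have g: "(\<lambda>k. K * q^k) \<longlonglongrightarrow> 0"
      using q0 q1 by (intro tendsto_mult_right_zero LIMSEQ_power_zero) auto
    show "(\<lambda>k. R k $ i) \<longlonglongrightarrow> 0 $ i"
      using Lim_null_comparison[OF _ g, of "\<lambda>k. R k $ i"] Rb by simp
  qed
  ultimately have "b - B *v y1 - Bt *v y2 = 0" by (rule LIMSEQ_unique)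
  then have "B *v y1 + Bt *v y2 = b" by (simp add: algebra_simps)
  then show ?thesis using XL unfolding X_def f_def by blast
qed

end
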